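(* Let $M$ be a matroid of rank $r$ on a finite set $E$, and let $\mathcal H$ be the set of hyperplanes of $M$. Suppose that for each $H\in\mathcal H$ a set $U_H$ is given with $\mathrm{cl}_{r-2}(U_H)=H$. Let \[ \mathcal U=\{U_H : H\in\mathcal H,\ |U_H|\ge r\}. \] Then $M=M^{(r-1)}\uparrow\mathcal U$.
   Context: For a matroid $M$ with independent sets $\mathcal I$, its rank-$k$ truncation is $M^{(k)}=(E,\{I\in\mathcal I : |I|\le k\})$. For a matroid $N$ of rank $\rho$, $T(N)=N^{(\rho-1)}$; a matroid $N'$ is an erection of $N$ if $T(N')=N$ or $N'=N$. A set $X$ is $k$-closed in $M$ if $\mathrm{cl}_M(Y)\subseteq X$ for all $Y\subseteq X$ with $|Y|\le k$; $\mathrm{cl}_k(X)$ is the intersection of all $k$-closed sets containing $X$ (so $\mathrm{cl}_k(X)$ is the smallest $k$-closed superset of $X$). Knuth's procedure on input a matroid $N$ of rank $\rho$ on $E$ and $\mathcal U\subseteq 2^E$: initialise $\mathcal H\leftarrow\mathcal U\cup\{F\cup\{e\}: F \text{ a hyperplane of } N,\ e\notin F\}$; while there are distinct $H,H'\in\mathcal H$ with $r_N(H\cap H')=\rho$, replace them by $H\cup H'$. It is known (Knuth) that the output $\mathcal H(N,\mathcal U)$ does not depend on the choices made and is the set of rank-$\rho$ flats of an erection of $N$; $N\uparrow\mathcal U$ denotes this erection (it equals $N$ when $\mathcal H(N,\mathcal U)=\{E\}$, and otherwise has rank $\rho+1$). *)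

theory Defs
  imports Main
begin

text \<open>A matroid is represented as a pair (ground set E, family of independent sets).\<close>
type_synonym 'a matroid = "'a set \<times> 'a set set"

definition matroid :: "'a matroid \<Rightarrow> bool" where
  "matroid M \<longleftrightarrow> finite (fst M) \<and> {} \<in> snd M \<and> (\<forall>I\<in>snd M. I \<subseteq> fst M)
     \<and> (\<forall>I J. J \<in> snd M \<and> I \<subseteq> J \<longrightarrow> I \<in> snd M)
     \<and> (\<forall>I J. I \<in> snd M \<and> J \<in> snd M \<and> card I < card J \<longrightarrow> (\<exists>e\<in>J - I. insert e I \<in> snd M))"

definition rk :: "'a matroid \<Rightarrow> 'a set \<Rightarrow> nat" where
  "rk M X = Max (card ` {I \<in> snd M. I \<subseteq> X})"

definition mrank :: "'a matroid \<Rightarrow> nat" where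
  "mrank M = rk M (fst M)"

definition cl :: "'a matroid \<Rightarrow> 'a set \<Rightarrow> 'a set" where
  "cl M X = {e \<in> fst M. rk M (insert e X) = rk M X}"

definition flat :: "'a matroid \<Rightarrow> 'a set \<Rightarrow> bool" where
  "flat M F \<longleftrightarrow> F \<subseteq> fst M \<and> cl M F = F"

definition hyperplanes :: "'a matroid \<Rightarrow> 'a set set" where
  "hyperplanes M = {F. flat M F \<and> rk M F + 1 = mrank M}"

definition truncation :: "'a matroid \<Rightarrow> nat \<Rightarrow> 'a matroid" where
  "truncation M k = (fst M, {I \<in> snd M. card I \<le> k})"

definition trunc1 :: "'a matroid \<Rightarrow> 'a matroid" where
  "trunc1 N = truncation N (mrank N - 1)"

definition k_closed :: "'a matroid \<Rightarrow> nat \<Rightarrow> 'a set \<Rightarrow> bool" where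
  "k_closed M k X \<longleftrightarrow> (\<forall>Y. Y \<subseteq> X \<and> card Y \<le> k \<longrightarrow> cl M Y \<subseteq> X)"

definition clk :: "'a matroid \<Rightarrow> nat \<Rightarrow> 'a set \<Rightarrow> 'a set" where
  "clk M k X = \<Inter> {Z. X \<subseteq> Z \<and> Z \<subseteq> fst M \<and> k_closed M k Z}"

definition knuth_init :: "'a matroid \<Rightarrow> 'a set set \<Rightarrow> 'a set set" where
  "knuth_init N U = U \<union> {insert e F | F e. F \<in> hyperplanes N \<and> e \<in> fst N \<and> e \<notin> F}"

definition knuth_step :: "'a matroid \<Rightarrow> 'a set set \<Rightarrow> 'a set set \<Rightarrow> bool" where
  "knuth_step N HH HH' \<longleftrightarrow> (\<exists>H H'. H \<in> HH \<and> H' \<in> HH \<and> H \<noteq> H' \<and> rk N (H \<inter> H') = mrank N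
      \<and> HH' = (HH - {H, H'}) \<union> {H \<union> H'})"

definition knuth_terminal :: "'a matroid \<Rightarrow> 'a set set \<Rightarrow> bool" where
  "knuth_terminal N HH \<longleftrightarrow> \<not> (\<exists>H\<in>HH. \<exists>H'\<in>HH. H \<noteq> H' \<and> rk N (H \<inter> H') = mrank N)"

text \<open>The output H(N,U) (independent of choices by Knuth's theorem).\<close>
definition knuth_output :: "'a matroid \<Rightarrow> 'a set set \<Rightarrow> 'a set set" where
  "knuth_output N U = (THE HH. (knuth_step N)\<^sup>*\<^sup>* (knuth_init N U) HH \<and> knuth_terminal N HH)"

definition erect :: "'a matroid \<Rightarrow> 'a set set \<Rightarrow> 'a matroid" where
  "erect N U = (if knuth_output N U = {fst N} then N
     else (THE N'. matroid N' \<and> trunc1 N' = N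
             \<and> {F. flat N' F \<and> rk N' F = mrank N} = knuth_output N U))"

end

theory Submission
  imports Defs
begin


locale mat =
  fixes M :: "'a matroid"
  assumes m: "matroid M"
begin

lemma finE: "finite (fst M)" using m by (simp add: matroid_def)
lemma indep_empty: "{} \<in> snd M" using m by (simp add: matroid_def)
lemma indep_sub: "I \<in> snd M \<Longrightarrow> I \<subseteq> fst M" using m by (auto simp: matroid_def)
lemma indep_subset: "J \<in> snd M \<Longrightarrow> I \<subseteq> J \<Longrightarrow> I \<in> snd M" using m unfolding matroid_def by blast
lemma augment: "I \<in> snd M \<Longrightarrow> J \<in> snd M \<Longrightarrow> card I < card J \<Longrightarrow> \<exists>e\<in>J - I. insert e I \<in> snd M"
  using m unfolding matroid_def by blast
lemma indep_finite: "I \<in> snd M \<Longrightarrow> finite I" using finite_subset[OF indep_sub finE] .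

lemma fin_fam: "finite {I \<in> snd M. I \<subseteq> X}"
  by (rule finite_subset[of _ "Pow (fst M)"]) (auto dest: indep_sub simp: finE)

lemma rk_ge: "J \<in> snd M \<Longrightarrow> J \<subseteq> X \<Longrightarrow> card J \<le> rk M X"
  unfolding rk_def by (rule Max_ge) (use fin_fam in auto)

lemma rk_obtain: obtains B where "B \<in> snd M" "B \<subseteq> X" "card B = rk M X"
proof -
  have "rk M X \<in> card ` {I \<in> snd M. I \<subseteq> X}"
    unfolding rk_def by (rule Max_in) (use fin_fam indep_empty in auto)
  thus ?thesis using that by auto
qed

lemma extend: "I \<in> snd M \<Longrightarrow> I \<subseteq> X \<Longrightarrow> \<exists>J. I \<subseteq> J \<and> J \<subseteq> X \<and> J \<in> snd M \<and> card J = rk M X"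
proof (induction "rk M X - card I" arbitrary: I rule: less_induct)
  case less
  show ?case
  proof (cases "card I < rk M X")
    case True
    obtain B where B: "B \<in> snd M" "B \<subseteq> X" "card B = rk M X" by (rule rk_obtain)
    then obtain e where e: "e \<in> B - I" "insert e I \<in> snd M"
      using augment[OF less.prems(1) B(1)] True by auto
    have fI: "finite I" using less.prems(1) indep_finite by blast
    have "card (insert e I) = card I + 1" using e fI by simp
    then have lt: "rk M X - card (insert e I) < rk M X - card I" using True by simp
    have sub: "insert e I \<subseteq> X" using e B less.prems by auto
    from less.hyps[OF lt e(2) sub] show ?thesis by blast
  next
    case False
    then show ?thesis using rk_ge[OF less.prems] less.prems by (intro exI[of _ I]) auto
  qed
qed

lemma rk_mono: assumes "X \<subseteq> Y" shows "rk M X \<le> rk M Y"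
proof -
  obtain B where B: "B \<in> snd M" "B \<subseteq> X" "card B = rk M X" by (rule rk_obtain)
  then show ?thesis using rk_ge[of B Y] assms by auto
qed

lemma rk_le_card: assumes "finite X" shows "rk M X \<le> card X"
proof -
  obtain B where B: "B \<in> snd M" "B \<subseteq> X" "card B = rk M X" by (rule rk_obtain)
  then show ?thesis using card_mono[OF assms B(2)] by simp
qed

lemma rk_indep: assumes "I \<in> snd M" shows "rk M I = card I"
  using rk_ge[OF assms order_refl] rk_le_card[OF indep_finite[OF assms]] by simp

lemma indep_of_rk: assumes "finite X" "rk M X = card X" shows "X \<in> snd M"
proof -
  obtain B where B: "B \<in> snd M" "B \<subseteq> X" "card B = rk M X" by (rule rk_obtain)
  then have "B = X" using card_subset_eq[OF assms(1) B(2)] assms by simp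
  then show ?thesis using B by simp
qed

lemma rk_insert: "rk M (insert e X) \<le> Suc (rk M X)"
proof -
  obtain B where B: "B \<in> snd M" "B \<subseteq> insert e X" "card B = rk M (insert e X)" by (rule rk_obtain)
  have "B - {e} \<in> snd M" using B indep_subset by blast
  moreover have "B - {e} \<subseteq> X" using B by auto
  ultimately have "card (B - {e}) \<le> rk M X" by (rule rk_ge)
  moreover have "card B \<le> Suc (card (B - {e}))"
  proof -
    have fB: "finite B" using B(1) indep_finite by blast
    have "card B \<le> card (insert e (B - {e}))" using fB by (intro card_mono) auto
    also have "\<dots> \<le> Suc (card (B - {e}))" using fB by (simp add: card_insert_if; arith)
    finally show ?thesis .
  qed
  ultimately show ?thesis using B by simp
qed

lemma cl_sub: "cl M X \<subseteq> fst M" by (auto simp: cl_def)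

lemma X_sub_cl: "X \<subseteq> fst M \<Longrightarrow> X \<subseteq> cl M X"
  by (auto simp: cl_def insert_absorb)

lemma key: assumes "Y \<subseteq> cl M X" shows "rk M (X \<union> Y) = rk M X"
proof (rule ccontr)
  assume ne: "rk M (X \<union> Y) \<noteq> rk M X"
  have "rk M X \<le> rk M (X \<union> Y)" by (rule rk_mono) auto
  with ne have lt: "rk M X < rk M (X \<union> Y)" by simp
  obtain B where B: "B \<in> snd M" "B \<subseteq> X" "card B = rk M X" by (rule rk_obtain)
  obtain J where J: "J \<in> snd M" "J \<subseteq> X \<union> Y" "card J = rk M (X \<union> Y)" by (rule rk_obtain)
  obtain e where e: "e \<in> J - B" "insert e B \<in> snd M" using augment[OF B(1) J(1)] lt B J by auto
  have c: "card (insert e B) = rk M X + 1" using e B indep_finite by simp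
  show False
  proof (cases "e \<in> X")
    case True
    then have "card (insert e B) \<le> rk M X" using rk_ge[OF e(2)] B by auto
    with c show False by simp
  next
    case False
    then have "e \<in> cl M X" using e J assms by auto
    then have "rk M (insert e X) = rk M X" by (simp add: cl_def)
    moreover have "card (insert e B) \<le> rk M (insert e X)" using rk_ge[OF e(2)] B by auto
    ultimately show False using c by simp
  qed
qed

lemma rk_cl_le: "rk M (cl M X) \<le> rk M X"
  using key[of "cl M X" X] rk_mono[of "cl M X" "X \<union> cl M X"] by auto

lemma rk_cl: "X \<subseteq> fst M \<Longrightarrow> rk M (cl M X) = rk M X"
  using rk_cl_le rk_mono[OF X_sub_cl] by (simp add: antisym)

lemma cl_cl: assumes "X \<subseteq> fst M" shows "cl M (cl M X) = cl M X"
proof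
  show "cl M X \<subseteq> cl M (cl M X)" by (rule X_sub_cl[OF cl_sub])
  show "cl M (cl M X) \<subseteq> cl M X"
  proof
    fix e assume e: "e \<in> cl M (cl M X)"
    then have h: "rk M (insert e (cl M X)) = rk M (cl M X)" "e \<in> fst M" by (auto simp: cl_def)
    have "rk M (insert e X) \<le> rk M (insert e (cl M X))"
      using X_sub_cl[OF assms] by (intro rk_mono) auto
    moreover have "rk M X \<le> rk M (insert e X)" by (rule rk_mono) auto
    ultimately have "rk M (insert e X) = rk M X" using h rk_cl[OF assms] by simp
    then show "e \<in> cl M X" using h by (simp add: cl_def)
  qed
qed

lemma flat_cl: "X \<subseteq> fst M \<Longrightarrow> flat M (cl M X)"
  by (simp add: flat_def cl_sub cl_cl)

lemma cl_flat_sub: assumes "Y \<subseteq> F" "F \<subseteq> fst M" "cl M F = F" shows "cl M Y \<subseteq> F"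
proof
  fix e assume e: "e \<in> cl M Y"
  show "e \<in> F"
  proof (rule ccontr)
    assume nF: "e \<notin> F"
    have eE: "e \<in> fst M" and eY: "rk M (insert e Y) = rk M Y" using e by (auto simp: cl_def)
    have "e \<notin> cl M F" using nF assms by simp
    then have "rk M (insert e F) \<noteq> rk M F" using eE by (simp add: cl_def)
    moreover have "rk M F \<le> rk M (insert e F)" by (rule rk_mono) auto
    ultimately have rF: "rk M (insert e F) = Suc (rk M F)" using rk_insert[of e F] by simp
    obtain B where B: "B \<in> snd M" "B \<subseteq> Y" "card B = rk M Y" by (rule rk_obtain)
    have BF: "B \<subseteq> F" using B(2) assms(1) by blast
    from extend[OF B(1) BF] obtain J where J: "B \<subseteq> J" "J \<subseteq> F" "J \<in> snd M" "card J = rk M F"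
      by blast
    have JeF: "J \<subseteq> insert e F" using J(2) by blast
    from extend[OF J(3) JeF] obtain J' where J': "J \<subseteq> J'" "J' \<subseteq> insert e F" "J' \<in> snd M"
        "card J' = rk M (insert e F)"
      by blast
    have "e \<in> J'"
    proof (rule ccontr)
      assume "e \<notin> J'"
      then have "J' \<subseteq> F" using J'(2) by blast
      then have "card J' \<le> rk M F" by (rule rk_ge[OF J'(3)])
      then show False using J'(4) rF by simp
    qed
    then have "insert e B \<subseteq> J'" using J(1) J'(1) by blast
    then have ieB: "insert e B \<in> snd M" by (rule indep_subset[OF J'(3)])
    have "insert e B \<subseteq> insert e Y" using B(2) by blast
    then have c1: "card (insert e B) \<le> rk M (insert e Y)" by (rule rk_ge[OF ieB])
    have "e \<notin> B" using B(2) BF nF by blast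
    then have "card (insert e B) = Suc (rk M Y)" using B(3) indep_finite[OF B(1)] by simp
    then show False using c1 eY by simp
  qed
qed

lemma sub_cl_basis: assumes "B \<in> snd M" "B \<subseteq> Y" "card B = rk M Y" "Y \<subseteq> fst M"
  shows "Y \<subseteq> cl M B"
proof
  fix y assume y: "y \<in> Y"
  have "rk M (insert y B) \<le> rk M Y" using y assms by (intro rk_mono) auto
  moreover have "rk M B \<le> rk M (insert y B)" by (rule rk_mono) auto
  ultimately have "rk M (insert y B) = rk M B" using assms rk_indep by simp
  then show "y \<in> cl M B" using y assms by (auto simp: cl_def)
qed

lemma indep_card_le: "I \<in> snd M \<Longrightarrow> card I \<le> mrank M"
  unfolding mrank_def using indep_sub rk_ge by blast

lemma rk_trunc: "rk (truncation M k) X = min (rk M X) k"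
proof -
  let ?S = "{I \<in> snd (truncation M k). I \<subseteq> X}"
  have S: "?S = {I \<in> snd M. I \<subseteq> X \<and> card I \<le> k}" by (auto simp: truncation_def)
  have fin: "finite ?S" unfolding S by (rule finite_subset[OF _ fin_fam[of X]]) auto
  have ne: "{} \<in> ?S" unfolding S using indep_empty by auto
  have le: "rk (truncation M k) X \<le> min (rk M X) k"
    unfolding rk_def[of "truncation M k" X]
  proof (rule Max.boundedI)
    show "finite (card ` ?S)" using fin by (rule finite_imageI)
    show "card ` ?S \<noteq> {}" using ne by blast
    fix a assume "a \<in> card ` ?S"
    then obtain I where I: "I \<in> ?S" "a = card I" by blast
    then have "I \<in> snd M" "I \<subseteq> X" "card I \<le> k" unfolding S by auto
    then show "a \<le> min (rk M X) k" using I(2) rk_ge by simp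
  qed
  obtain B where B: "B \<in> snd M" "B \<subseteq> X" "card B = rk M X" by (rule rk_obtain)
  have ge: "min (rk M X) k \<le> rk (truncation M k) X"
  proof (cases "card B \<le> k")
    case True
    then have "B \<in> ?S" unfolding S using B by auto
    then have "card B \<in> card ` ?S" by (rule imageI)
    then have "card B \<le> rk (truncation M k) X"
      unfolding rk_def[of "truncation M k" X] by (rule Max_ge[OF finite_imageI[OF fin]])
    then show ?thesis using B by simp
  next
    case False
    then have "k \<le> card B" by simp
    then obtain B' where B': "B' \<subseteq> B" "card B' = k"
      by (rule obtain_subset_with_card_n)
    then have "B' \<in> ?S" unfolding S using B indep_subset by auto
    then have "card B' \<in> card ` ?S" by (rule imageI)
    then have "card B' \<le> rk (truncation M k) X"
      unfolding rk_def[of "truncation M k" X] by (rule Max_ge[OF finite_imageI[OF fin]])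
    then show ?thesis using B' by simp
  qed
  from le ge show ?thesis by (rule antisym)
qed

end



context mat
begin

lemma clk_sub: "X \<subseteq> Z \<Longrightarrow> Z \<subseteq> fst M \<Longrightarrow> k_closed M k Z \<Longrightarrow> clk M k X \<subseteq> Z"
  unfolding clk_def by blast

lemma kclosed_E: "k_closed M k (fst M)" by (auto simp: k_closed_def cl_def)

lemma sub_clk: "X \<subseteq> fst M \<Longrightarrow> X \<subseteq> clk M k X" unfolding clk_def by blast

lemma flat_kclosed: "F \<subseteq> fst M \<Longrightarrow> cl M F = F \<Longrightarrow> k_closed M k F"
  using cl_flat_sub by (auto simp: k_closed_def)

lemma sub_cl_of_rank: assumes "Z \<subseteq> X" "X \<subseteq> fst M" "rk M X \<le> rk M Z" shows "X \<subseteq> cl M Z"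
proof
  fix x assume x: "x \<in> X"
  have "rk M (insert x Z) \<le> rk M X" using x assms by (intro rk_mono) auto
  moreover have "rk M Z \<le> rk M (insert x Z)" by (rule rk_mono) auto
  ultimately show "x \<in> cl M Z" using x assms by (auto simp: cl_def)
qed

lemma indep_top: assumes "mrank M = s" "1 \<le> s" "card I = s" "I \<subseteq> fst M"
  shows "I \<in> snd M \<longleftrightarrow> (\<exists>b\<in>I. I - {b} \<in> snd M) \<and> \<not>(\<exists>F. flat M F \<and> rk M F = s - 1 \<and> I \<subseteq> F)"
proof
  assume I: "I \<in> snd M"
  have "I \<noteq> {}" using assms(2,3) by (metis card.empty not_one_le_zero)
  then obtain b where b: "b \<in> I" by blast
  have "I - {b} \<subseteq> I" by blast
  then have "I - {b} \<in> snd M" by (rule indep_subset[OF I])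
  then have ex: "\<exists>b\<in>I. I - {b} \<in> snd M" using b by blast
  have nf: "\<not>(\<exists>F. flat M F \<and> rk M F = s - 1 \<and> I \<subseteq> F)"
  proof
    assume "\<exists>F. flat M F \<and> rk M F = s - 1 \<and> I \<subseteq> F"
    then obtain F where F: "rk M F = s - 1" "I \<subseteq> F" by blast
    have "card I \<le> rk M F" by (rule rk_ge[OF I F(2)])
    then show False using assms(2,3) F(1) by simp
  qed
  show "(\<exists>b\<in>I. I - {b} \<in> snd M) \<and> \<not>(\<exists>F. flat M F \<and> rk M F = s - 1 \<and> I \<subseteq> F)"
    using ex nf by (rule conjI)
next
  assume h: "(\<exists>b\<in>I. I - {b} \<in> snd M) \<and> \<not>(\<exists>F. flat M F \<and> rk M F = s - 1 \<and> I \<subseteq> F)"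
  then obtain b where b: "b \<in> I" "I - {b} \<in> snd M" by blast
  have nF: "\<not>(\<exists>F. flat M F \<and> rk M F = s - 1 \<and> I \<subseteq> F)" using h by (rule conjunct2)
  have fI: "finite I" using assms(4) finE finite_subset by blast
  show "I \<in> snd M"
  proof (rule ccontr)
    assume nI: "I \<notin> snd M"
    have r1: "rk M I \<le> card I" by (rule rk_le_card[OF fI])
    have r2: "rk M I \<noteq> card I"
    proof
      assume "rk M I = card I"
      then have "I \<in> snd M" by (rule indep_of_rk[OF fI])
      then show False using nI by simp
    qed
    have "I - {b} \<subseteq> I" by blast
    then have r3: "card (I - {b}) \<le> rk M I" by (rule rk_ge[OF b(2)])
    have r4: "card (I - {b}) = s - 1" using b(1) fI assms(3) by simp
    have rI: "rk M I = s - 1" using r1 r2 r3 r4 assms(3) by linarith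
    have "flat M (cl M I) \<and> rk M (cl M I) = s - 1 \<and> I \<subseteq> cl M I"
      using flat_cl[OF assms(4)] rk_cl[OF assms(4)] X_sub_cl[OF assms(4)] rI by simp
    then have "\<exists>F. flat M F \<and> rk M F = s - 1 \<and> I \<subseteq> F" by blast
    then show False using nF by simp
  qed
qed

end

lemma term_exists: "finite HH \<Longrightarrow> \<exists>HH'. (knuth_step N)\<^sup>*\<^sup>* HH HH' \<and> knuth_terminal N HH'"
proof (induction "card HH" arbitrary: HH rule: less_induct)
  case less
  show ?case
  proof (cases "knuth_terminal N HH")
    case True then show ?thesis by blast
  next
    case False
    then obtain X X' where XX: "X \<in> HH" "X' \<in> HH" "X \<noteq> X'" "rk N (X \<inter> X') = mrank N"
      unfolding knuth_terminal_def by blast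
    define HH2 where "HH2 = (HH - {X, X'}) \<union> {X \<union> X'}"
    have st: "knuth_step N HH HH2" unfolding knuth_step_def HH2_def using XX by blast
    have f2: "finite HH2" using less.prems by (simp add: HH2_def)
    have c2: "card {X, X'} = 2" using XX by simp
    have sub: "{X, X'} \<subseteq> HH" using XX by simp
    have "card (HH - {X,X'}) = card HH - 2" using c2 sub less.prems
      by (simp add: card_Diff_subset)
    moreover have "2 \<le> card HH" using card_mono[OF less.prems sub] c2 by simp
    moreover have "card HH2 \<le> Suc (card (HH - {X, X'}))"
      unfolding HH2_def using less.prems by (simp add: card_insert_if)
    ultimately have "card HH2 < card HH" by simp
    then obtain T where "(knuth_step N)\<^sup>*\<^sup>* HH2 T" "knuth_terminal N T"
      using less.hyps f2 by blast
    then show ?thesis using converse_rtranclp_into_rtranclp[of "knuth_step N" HH HH2, OF st] by blast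
  qed
qed

locale L41 = mat M for M :: "'a matroid" +
  fixes UH :: "'a set \<Rightarrow> 'a set"
  assumes r2: "2 \<le> mrank M"
    and UHcl: "\<forall>H\<in>hyperplanes M. clk M (mrank M - 2) (UH H) = H"
begin

abbreviation "E \<equiv> fst M"
abbreviation "r \<equiv> mrank M"
abbreviation "N \<equiv> truncation M (mrank M - 1)"
abbreviation "UU \<equiv> {UH H | H. H \<in> hyperplanes M \<and> card (UH H) \<ge> mrank M}"

lemma fstN: "fst (truncation M k) = E" by (simp add: truncation_def)
lemma rkN: "rk (truncation M k) X = min (rk M X) k" by (rule rk_trunc)
lemma mrankNk: "mrank (truncation M k) = min r k"
  unfolding mrank_def[of "truncation M k"] fstN rkN by (simp add: mrank_def)
lemma mrankN: "mrank N = r - 1"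
  using mrankNk[of "r - 1"] by simp

lemma hypM: "F \<in> hyperplanes M \<longleftrightarrow> F \<subseteq> E \<and> cl M F = F \<and> rk M F = r - 1"
  using r2 by (auto simp: hyperplanes_def flat_def)

lemma clN: assumes "rk M F = r - 2" shows "cl N F = cl M F"
proof -
  have "\<And>e. rk M (insert e F) \<le> r - 1"
  proof -
    fix e
    have "rk M (insert e F) \<le> Suc (r - 2)" using rk_insert[of e F] assms by simp
    then show "rk M (insert e F) \<le> r - 1" using r2 by linarith
  qed
  then have m: "\<And>e. min (rk M (insert e F)) (r - 1) = rk M (insert e F)" by (simp add: min_def)
  have m2: "min (rk M F) (r - 1) = rk M F" using assms by simp
  show ?thesis unfolding cl_def fstN rkN m m2 ..
qed

lemma hypN: "F \<in> hyperplanes N \<longleftrightarrow> F \<subseteq> E \<and> cl M F = F \<and> rk M F = r - 2"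
proof
  assume h: "F \<in> hyperplanes N"
  then have fl: "F \<subseteq> E" "cl N F = F" and rr: "rk N F + 1 = mrank N"
    by (auto simp: hyperplanes_def flat_def fstN)
  from rr have rF: "rk M F = r - 2" using r2 by (simp add: rkN mrankNk min_def split: if_splits)
  with fl clN show "F \<subseteq> E \<and> cl M F = F \<and> rk M F = r - 2" by simp
next
  assume h: "F \<subseteq> E \<and> cl M F = F \<and> rk M F = r - 2"
  then show "F \<in> hyperplanes N" using clN[of F] r2
    by (auto simp: hyperplanes_def flat_def fstN rkN mrankNk)
qed

lemma init_eq: "knuth_init N UU = UU \<union> {insert e F | F e. F \<in> hyperplanes N \<and> e \<in> E \<and> e \<notin> F}"
  by (simp add: knuth_init_def fstN)

lemma UH_facts: assumes "H \<in> hyperplanes M"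
  shows "UH H \<subseteq> E" "UH H \<subseteq> H" "rk M (UH H) = r - 1"
proof -
  have c: "clk M (r-2) (UH H) = H" using UHcl assms by blast
  have HE: "H \<subseteq> E" "cl M H = H" "rk M H = r-1" using assms hypM by auto
  show UE: "UH H \<subseteq> E"
  proof (rule ccontr)
    assume nU: "\<not> UH H \<subseteq> E"
    then have e0: "{Z. UH H \<subseteq> Z \<and> Z \<subseteq> E \<and> k_closed M (r-2) Z} = {}" by blast
    have "clk M (r-2) (UH H) = UNIV" unfolding clk_def e0 by simp
    then have "E = UNIV" using c HE by auto
    then show False using nU by simp
  qed
  show US: "UH H \<subseteq> H" using sub_clk[OF UE, of "r-2"] c by simp
  have "rk M (UH H) \<le> r - 1" using rk_mono[OF US] HE by simp
  moreover have "\<not> rk M (UH H) \<le> r - 2"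
  proof
    assume le: "rk M (UH H) \<le> r - 2"
    have "clk M (r-2) (UH H) \<subseteq> cl M (UH H)"
      by (rule clk_sub[OF X_sub_cl[OF UE] cl_sub flat_kclosed[OF cl_sub cl_cl[OF UE]]])
    then have "H \<subseteq> cl M (UH H)" using c by simp
    then have "rk M H \<le> rk M (cl M (UH H))" by (rule rk_mono)
    then have "rk M H \<le> rk M (UH H)" using rk_cl[OF UE] by simp
    then show False using le HE r2 by simp
  qed
  ultimately show "rk M (UH H) = r - 1" by simp
qed

lemma init_ranks: assumes "Y \<in> knuth_init N UU" shows "Y \<subseteq> E \<and> rk M Y = r - 1"
proof (cases "Y \<in> UU")
  case True
  then obtain H where "Y = UH H" "H \<in> hyperplanes M" by blast
  then show ?thesis using UH_facts[of H] by simp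
next
  case False
  then obtain F e where Fe: "Y = insert e F" "F \<in> hyperplanes N" "e \<in> E" "e \<notin> F"
    using assms unfolding init_eq by blast
  have F: "F \<subseteq> E" "cl M F = F" "rk M F = r - 2" using Fe hypN by auto
  have "e \<notin> cl M F" using F Fe by simp
  then have "rk M (insert e F) \<noteq> rk M F" using Fe by (simp add: cl_def)
  moreover have "rk M F \<le> rk M (insert e F)" by (rule rk_mono) auto
  moreover have "rk M (insert e F) \<le> Suc (rk M F)" by (rule rk_insert)
  ultimately have "rk M (insert e F) = r - 1" using F r2 by simp
  then show ?thesis using Fe F by simp
qed

definition Inv where
  "Inv HH \<longleftrightarrow> (\<forall>X\<in>HH. X \<subseteq> E \<and> rk M X = r - 1) \<and> (\<forall>Y\<in>knuth_init N UU. \<exists>X\<in>HH. Y \<subseteq> X)"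

lemma InvD1: "Inv HH \<Longrightarrow> X \<in> HH \<Longrightarrow> X \<subseteq> E \<and> rk M X = r - 1"
  unfolding Inv_def by blast
lemma InvD2: "Inv HH \<Longrightarrow> Y \<in> knuth_init N UU \<Longrightarrow> \<exists>X\<in>HH. Y \<subseteq> X"
  unfolding Inv_def by blast

lemma Inv_init: "Inv (knuth_init N UU)"
  unfolding Inv_def using init_ranks by blast

lemma merge_rank: assumes "X \<subseteq> E" "rk M X = r - 1" "X' \<subseteq> E" "rk M X' = r - 1"
    "rk N (X \<inter> X') = mrank N"
  shows "rk M (X \<union> X') = r - 1"
proof -
  have ge: "r - 1 \<le> rk M (X \<inter> X')" using assms(5) by (simp add: rkN mrankNk)
  have s1: "X \<subseteq> cl M (X \<inter> X')"
    by (rule sub_cl_of_rank) (use ge assms(1,2) in auto)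
  have s2: "X' \<subseteq> cl M (X \<inter> X')"
    by (rule sub_cl_of_rank) (use ge assms(3,4) in auto)
  have "rk M (X \<union> X') \<le> rk M (cl M (X \<inter> X'))" using s1 s2 by (intro rk_mono) auto
  also have "\<dots> \<le> rk M (X \<inter> X')" by (rule rk_cl_le)
  also have "\<dots> \<le> rk M X" by (rule rk_mono) auto
  finally have "rk M (X \<union> X') \<le> r - 1" using assms by simp
  moreover have "rk M X \<le> rk M (X \<union> X')" by (rule rk_mono) auto
  ultimately show ?thesis using assms by simp
qed

lemma Inv_step: assumes "Inv HH" "knuth_step N HH HH'" shows "Inv HH'"
proof -
  obtain X X' where XX: "X \<in> HH" "X' \<in> HH" "X \<noteq> X'" "rk N (X \<inter> X') = mrank N"
    "HH' = (HH - {X, X'}) \<union> {X \<union> X'}"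
    using assms(2) unfolding knuth_step_def by blast
  have a1: "\<forall>Z\<in>HH. Z \<subseteq> E \<and> rk M Z = r - 1" using InvD1[OF assms(1)] by blast
  have x1: "X \<subseteq> E \<and> rk M X = r - 1" using a1 XX(1) by blast
  have x2: "X' \<subseteq> E \<and> rk M X' = r - 1" using a1 XX(2) by blast
  have "rk M (X \<union> X') = r - 1" using x1 x2 XX(4) merge_rank by blast
  moreover have "X \<union> X' \<subseteq> E" using x1 x2 by blast
  ultimately have p1: "\<forall>Z\<in>HH'. Z \<subseteq> E \<and> rk M Z = r - 1" using a1 unfolding XX(5) by blast
  have p2: "\<forall>Y\<in>knuth_init N UU. \<exists>Z\<in>HH'. Y \<subseteq> Z"
  proof
    fix Y assume "Y \<in> knuth_init N UU"
    then obtain Z where Z: "Z \<in> HH" "Y \<subseteq> Z" using InvD2[OF assms(1)] by blast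
    show "\<exists>Z\<in>HH'. Y \<subseteq> Z"
    proof (cases "Z \<in> {X, X'}")
      case True
      then have "Y \<subseteq> X \<union> X'" using Z by blast
      moreover have "X \<union> X' \<in> HH'" using XX(5) by blast
      ultimately show ?thesis by blast
    next
      case False
      then have "Z \<in> HH'" using Z(1) XX(5) by blast
      then show ?thesis using Z(2) by blast
    qed
  qed
  show ?thesis unfolding Inv_def using p1 p2 by (rule conjI)
qed

lemma Inv_reach: "(knuth_step N)\<^sup>*\<^sup>* (knuth_init N UU) HH \<Longrightarrow> Inv HH"
proof (induction rule: rtranclp_induct)
  case base then show ?case by (rule Inv_init)
next
  case (step y z) then show ?case using Inv_step by blast
qed

lemma kclosed_final: assumes "Inv T" "knuth_terminal N T" "X \<in> T"
  shows "k_closed M (r-2) X"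
  unfolding k_closed_def
proof (intro allI impI)
  fix Y assume Y: "Y \<subseteq> X \<and> card Y \<le> r - 2"
  have XE: "X \<subseteq> E" "rk M X = r - 1" using InvD1[OF assms(1,3)] by auto
  have YE: "Y \<subseteq> E" using Y XE by auto
  have fY: "finite Y" using YE finE finite_subset by blast
  obtain B where B: "B \<in> snd M" "B \<subseteq> Y" "card B = rk M Y" by (rule rk_obtain)
  have cB: "card B \<le> r - 2" using B rk_le_card[OF fY] Y by simp
  have BX: "B \<subseteq> X" using B Y by auto
  obtain J where J: "B \<subseteq> J" "J \<subseteq> X" "J \<in> snd M" "card J = r - 1"
    using extend[OF B(1) BX] XE by auto
  have fB: "finite B" using B(1) indep_finite by blast
  have "\<not> J \<subseteq> B"
  proof
    assume "J \<subseteq> B"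
    then have "card J \<le> card B" using card_mono[OF fB] by blast
    then show False using cB J r2 by simp
  qed
  then obtain e where e: "e \<in> J" "e \<notin> B" by blast
  define I where "I = J - {e}"
  have fJ: "finite J" using J(3) indep_finite by blast
  have I: "I \<in> snd M" "B \<subseteq> I" "card I = r - 2" "I \<subseteq> E"
    using J e fJ XE indep_subset[OF J(3)] by (auto simp: I_def)
  define F where "F = cl M I"
  have FN: "F \<in> hyperplanes N"
    unfolding hypN F_def using cl_sub cl_cl[OF I(4)] rk_cl[OF I(4)] rk_indep[OF I(1)] I by simp
  have JI: "insert e I = J" using e by (auto simp: I_def)
  have eF: "e \<notin> F"
  proof
    assume "e \<in> F"
    then have "rk M (insert e I) = rk M I" by (simp add: F_def cl_def)
    then show False using JI rk_indep[OF J(3)] rk_indep[OF I(1)] J I r2 by simp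
  qed
  have eE: "e \<in> E" using e J XE by auto
  have "insert e F \<in> knuth_init N UU" unfolding init_eq using FN eF eE by blast
  then obtain X' where X': "X' \<in> T" "insert e F \<subseteq> X'" using InvD2[OF assms(1)] by blast
  have IF: "I \<subseteq> F" unfolding F_def using X_sub_cl[OF I(4)] .
  have "J \<subseteq> X \<inter> X'" using J(2) X' IF JI by auto
  then have "card J \<le> rk M (X \<inter> X')" by (rule rk_ge[OF J(3)])
  then have "r - 1 \<le> rk M (X \<inter> X')" using J(4) by simp
  moreover have "rk M (X \<inter> X') \<le> r - 1" using rk_mono[of "X \<inter> X'" X] XE by auto
  ultimately have "rk N (X \<inter> X') = mrank N" by (simp add: rkN mrankNk)
  then have XX': "X = X'" using assms(2,3) X' unfolding knuth_terminal_def by blast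
  have FE: "F \<subseteq> E" "cl M F = F" using FN hypN by auto
  have "Y \<subseteq> cl M B" using sub_cl_basis[OF B YE] .
  moreover have "cl M B \<subseteq> F" using cl_flat_sub[OF _ FE] I(2) IF by blast
  ultimately have "Y \<subseteq> F" by blast
  then have "cl M Y \<subseteq> F" using cl_flat_sub[OF _ FE] by blast
  then show "cl M Y \<subseteq> X" using X' XX' by blast
qed

lemma hyp_in_final: assumes "Inv T" "knuth_terminal N T" "H \<in> hyperplanes M" shows "H \<in> T"
proof -
  let ?U = "UH H"
  have U: "?U \<subseteq> E" "?U \<subseteq> H" "rk M ?U = r - 1" using UH_facts assms(3) by auto
  have HE: "H \<subseteq> E" "cl M H = H" "rk M H = r - 1" using assms(3) hypM by auto
  have "\<exists>X\<in>T. ?U \<subseteq> X"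
  proof (cases "r \<le> card ?U")
    case True
    then have "?U \<in> knuth_init N UU" unfolding init_eq using assms(3) by blast
    then show ?thesis using InvD2[OF assms(1)] by blast
  next
    case False
    have fU: "finite ?U" using U finE finite_subset by blast
    have "r - 1 \<le> card ?U" using rk_le_card[OF fU] U by simp
    then have cU: "card ?U = r - 1" using False by simp
    then have iU: "?U \<in> snd M" using indep_of_rk[OF fU] U by simp
    have "?U \<noteq> {}" using cU r2 by auto
    then obtain u where u: "u \<in> ?U" by blast
    define I where "I = ?U - {u}"
    have I: "I \<in> snd M" "card I = r - 2" "I \<subseteq> E"
      using indep_subset[OF iU] u fU cU U by (auto simp: I_def)
    define F where "F = cl M I"
    have FN: "F \<in> hyperplanes N"
      unfolding hypN F_def using cl_sub cl_cl[OF I(3)] rk_cl[OF I(3)] rk_indep[OF I(1)] I by simp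
    have UI: "insert u I = ?U" using u by (auto simp: I_def)
    have uF: "u \<notin> F"
    proof
      assume "u \<in> F"
      then have "rk M (insert u I) = rk M I" by (simp add: F_def cl_def)
      then show False using UI U rk_indep[OF I(1)] I r2 by simp
    qed
    have uE: "u \<in> E" using u U by auto
    have "insert u F \<in> knuth_init N UU" unfolding init_eq using FN uF uE by blast
    then obtain X where X: "X \<in> T" "insert u F \<subseteq> X" using InvD2[OF assms(1)] by blast
    have "I \<subseteq> F" unfolding F_def using X_sub_cl[OF I(3)] .
    then have "?U \<subseteq> X" using X UI by auto
    then show ?thesis using X by blast
  qed
  then obtain X where X: "X \<in> T" "?U \<subseteq> X" by blast
  have XE: "X \<subseteq> E" "rk M X = r - 1" using InvD1[OF assms(1) X(1)] by auto
  have "k_closed M (r-2) X" using kclosed_final assms X by blast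
  then have "clk M (r-2) ?U \<subseteq> X" using clk_sub[OF X(2) XE(1)] by blast
  moreover have "clk M (r-2) ?U = H" using UHcl assms(3) by blast
  ultimately have HX: "H \<subseteq> X" by simp
  have "X \<subseteq> cl M H" using sub_cl_of_rank[OF HX XE(1)] XE HE by simp
  then have "X \<subseteq> H" using HE(2) by simp
  then have "X = H" using HX by blast
  then show ?thesis using X by simp
qed

lemma final_eq: assumes "Inv T" "knuth_terminal N T" shows "T = hyperplanes M"
proof
  show "hyperplanes M \<subseteq> T" using hyp_in_final assms by blast
  show "T \<subseteq> hyperplanes M"
  proof
    fix X assume X: "X \<in> T"
    have XE: "X \<subseteq> E" "rk M X = r - 1" using InvD1[OF assms(1) X(1)] by auto
    define H where "H = cl M X"
    have HM: "H \<in> hyperplanes M" unfolding hypM H_def using cl_sub cl_cl[OF XE(1)] rk_cl[OF XE(1)] XE by simp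
    have HT: "H \<in> T" using hyp_in_final[OF assms HM] .
    have XH: "X \<subseteq> H" unfolding H_def using X_sub_cl[OF XE(1)] .
    then have "X \<inter> H = X" by blast
    then have "rk N (X \<inter> H) = mrank N" using XE by (simp add: rkN mrankNk)
    then have "X = H" using assms(2) X HT unfolding knuth_terminal_def by blast
    then show "X \<in> hyperplanes M" using HM by simp
  qed
qed

lemma knuth_out: "knuth_output N UU = hyperplanes M"
proof -
  have "knuth_init N UU \<subseteq> Pow E" using init_ranks by blast
  then have fin: "finite (knuth_init N UU)" by (rule finite_subset) (simp add: finE)
  obtain T where T: "(knuth_step N)\<^sup>*\<^sup>* (knuth_init N UU) T" "knuth_terminal N T"
    using term_exists[OF fin] by blast
  have TH: "T = hyperplanes M" using final_eq Inv_reach T by blast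
  show ?thesis unfolding knuth_output_def
  proof (rule the_equality)
    show "(knuth_step N)\<^sup>*\<^sup>* (knuth_init N UU) (hyperplanes M) \<and> knuth_terminal N (hyperplanes M)"
      using T TH by simp
    fix HH assume "(knuth_step N)\<^sup>*\<^sup>* (knuth_init N UU) HH \<and> knuth_terminal N HH"
    then show "HH = hyperplanes M" using final_eq Inv_reach by blast
  qed
qed

lemma unique: assumes "matroid N'" "trunc1 N' = N" "{F. flat N' F \<and> rk N' F = mrank N} = hyperplanes M"
  shows "N' = M"
proof -
  interpret N': mat N' by unfold_locales (rule assms(1))
  have fst: "fst N' = E" using arg_cong[OF assms(2), of fst] by (simp add: trunc1_def truncation_def)
  have snd: "{I \<in> snd N'. card I \<le> mrank N' - 1} = {I \<in> snd M. card I \<le> r - 1}"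
    using arg_cong[OF assms(2), of snd] by (simp add: trunc1_def truncation_def)
  let ?s = "mrank N'"
  obtain B where B: "B \<in> snd M" "B \<subseteq> E" "card B = rk M E" by (rule rk_obtain)
  then have cBr: "card B = r" by (simp add: mrank_def)
  obtain B' where B': "B' \<subseteq> B" "card B' = r - 1" using obtain_subset_with_card_n[of "r - 1" B] cBr by auto
  have "B' \<in> snd M" using B'(1) B(1) indep_subset by blast
  then have "B' \<in> {I \<in> snd M. card I \<le> r - 1}" using B'(2) by simp
  then have "B' \<in> {I \<in> snd N'. card I \<le> ?s - 1}" using snd by blast
  then have "card B' \<le> ?s - 1" by simp
  then have s1: "r \<le> ?s" using B'(2) r2 by simp
  obtain C where C: "C \<in> snd N'" "C \<subseteq> fst N'" "card C = rk N' (fst N')" by (rule N'.rk_obtain)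
  then have cCs: "card C = ?s" by (simp add: mrank_def)
  obtain C' where C': "C' \<subseteq> C" "card C' = ?s - 1" using obtain_subset_with_card_n[of "?s - 1" C] cCs by auto
  have "C' \<in> snd N'" using C(1) C'(1) N'.indep_subset by blast
  then have "C' \<in> {I \<in> snd N'. card I \<le> ?s - 1}" using C'(2) by simp
  then have "C' \<in> {I \<in> snd M. card I \<le> r - 1}" using snd by blast
  then have "card C' \<le> r - 1" by simp
  then have s2: "?s \<le> r" using C'(2) s1 r2 by simp
  have sr: "?s = r" using s1 s2 by simp
  have snd': "I \<in> snd N' \<longleftrightarrow> I \<in> snd M" if cI: "card I \<le> r - 1" for I
  proof -
    have "I \<in> {I \<in> snd N'. card I \<le> ?s - 1} \<longleftrightarrow> I \<in> {I \<in> snd M. card I \<le> r - 1}"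
      using snd by simp
    then show ?thesis using cI sr by simp
  qed
  have hyp': "\<And>F. (flat N' F \<and> rk N' F = r - 1) \<longleftrightarrow> (flat M F \<and> rk M F = r - 1)"
  proof -
    fix F
    have "(flat N' F \<and> rk N' F = r - 1) \<longleftrightarrow> F \<in> {F. flat N' F \<and> rk N' F = mrank N}"
      unfolding mrankN by simp
    also have "\<dots> \<longleftrightarrow> F \<in> hyperplanes M" using assms(3) by simp
    also have "\<dots> \<longleftrightarrow> (flat M F \<and> rk M F = r - 1)" using r2 by (auto simp: hyperplanes_def)
    finally show "(flat N' F \<and> rk N' F = r - 1) \<longleftrightarrow> (flat M F \<and> rk M F = r - 1)" .
  qed
  have "snd N' = snd M"
  proof (intro set_eqI)
    fix I
    show "I \<in> snd N' \<longleftrightarrow> I \<in> snd M"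
    proof (cases "I \<subseteq> E")
      case False
      then show ?thesis using indep_sub N'.indep_sub fst by blast
    next
      case True
      have fI: "finite I" using True finE finite_subset by blast
      consider "card I \<le> r - 1" | "card I > r" | "card I = r" by linarith
      then show ?thesis
      proof cases
        case 1 then show ?thesis using snd' by blast
      next
        case 2
        have "I \<notin> snd M" using indep_card_le[of I] 2 by linarith
        moreover have "I \<notin> snd N'" using N'.indep_card_le[of I] 2 sr by linarith
        ultimately show ?thesis by simp
      next
        case 3
        have ex: "(\<exists>b\<in>I. I - {b} \<in> snd N') \<longleftrightarrow> (\<exists>b\<in>I. I - {b} \<in> snd M)"
        proof -
          have "\<And>b. b \<in> I \<Longrightarrow> card (I - {b}) \<le> r - 1" using fI 3 by simp
          then show ?thesis using snd' by blast
        qed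
        have "I \<in> snd N' \<longleftrightarrow> (\<exists>b\<in>I. I - {b} \<in> snd N') \<and> \<not>(\<exists>F. flat N' F \<and> rk N' F = r - 1 \<and> I \<subseteq> F)"
          using N'.indep_top[OF sr _ 3] r2 True fst by simp
        also have "\<dots> \<longleftrightarrow> (\<exists>b\<in>I. I - {b} \<in> snd M) \<and> \<not>(\<exists>F. flat M F \<and> rk M F = r - 1 \<and> I \<subseteq> F)"
          using ex hyp' by blast
        also have "\<dots> \<longleftrightarrow> I \<in> snd M"
          using indep_top[OF refl _ 3 True] r2 by simp
        finally show ?thesis .
      qed
    qed
  qed
  then show ?thesis using fst by (simp add: prod_eq_iff)
qed

lemma main: "M = erect N UU"
proof -
  have out: "knuth_output N UU = hyperplanes M" by (rule knuth_out)
  have rE: "rk M E = r" by (simp add: mrank_def)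
  have "rk M E \<noteq> r - 1" using rE r2 by linarith
  then have "E \<notin> hyperplanes M" using hypM[of E] by blast
  then have ne: "knuth_output N UU \<noteq> {fst N}" using out fstN by auto
  have "erect N UU = (THE N'. matroid N' \<and> trunc1 N' = N
             \<and> {F. flat N' F \<and> rk N' F = mrank N} = knuth_output N UU)"
    unfolding erect_def using ne by simp
  also have "\<dots> = M"
  proof (rule the_equality)
    have "{F. flat M F \<and> rk M F = mrank N} = hyperplanes M"
      using r2 by (auto simp: hyperplanes_def mrankNk)
    then show "matroid M \<and> trunc1 M = N \<and> {F. flat M F \<and> rk M F = mrank N} = knuth_output N UU"
      using m out by (simp add: trunc1_def)
  next
    fix N' assume "matroid N' \<and> trunc1 N' = N \<and> {F. flat N' F \<and> rk N' F = mrank N} = knuth_output N UU"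
    then show "N' = M" using unique[of N'] out by simp
  qed
  finally show ?thesis by simp
qed

end


theorem lemma4p1:
  fixes M :: "'a matroid" and UH :: "'a set \<Rightarrow> 'a set"
  assumes "matroid M"
    and "2 \<le> mrank M"
    and "\<forall>H\<in>hyperplanes M. clk M (mrank M - 2) (UH H) = H"
  shows "M = erect (truncation M (mrank M - 1))
                   {UH H | H. H \<in> hyperplanes M \<and> card (UH H) \<ge> mrank M}"
proof -
  interpret L41 M UH using assms by unfold_locales auto
  show ?thesis by (rule main)
qed

end
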